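(* Let $t_f$ be the final time of an extremal of the planar minimum-fuel problem with final constraints on energy and angular momentum modulus. Use the angles of the context and suppose that at $t_f$: (i) $\vec r=r(\cos\varphi,\sin\varphi)$, $\vec v=v(-\sin(\varphi-\gamma),\cos(\varphi-\gamma))$ with $v\neq0$ and $\cos\gamma\neq0$; (ii) for some nonzero constant $c$, $\vec p_r=c\,\omega(-\cos(\theta-\varphi),\sin(\theta-\varphi))$ and $\vec p_v=c(\sin(\theta-\varphi),\cos(\theta-\varphi))$; (iii) $\omega\, r\, v\sin(\theta-\gamma)=v_c^2\sin\theta$ with $v_c=\sqrt{\mu/r}$; (iv) the final transversality relation $(\vec p_r^{\,t}\vec r+\vec p_v^{\,t}\vec v)(\vec r^{\,t}\vec v)=(\vec p_v^{\,t}\vec r)(v^2+v_c^2)$ holds. Then $(v_c^2+\omega^2r^2)\sin\theta(t_f)=0$, hence $\sin\theta(t_f)=0$. If moreover the closed-loop relation $\sin(\gamma-\theta)=\frac{v_c}{v}\frac{\sin\theta}{\sqrt{1-3\sin^2\theta}}$ holds at $t_f$ and $\theta,\gamma\in(-\pi/2,\pi/2)$, then $\theta(t_f)=\gamma(t_f)=0$: the final point is an apside (perigee or apogee) of the targeted elliptical orbit.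
   Context: Planar motion in an Earth-centered inertial frame $(O,x,y)$. $\varphi$ is the longitude of the position measured from the $x$ axis; $\theta$ is the pitch angle (thrust direction $\vec u$) and $\gamma$ the flight path angle (velocity direction), both measured positively from the local horizontal; $\omega$ is the angular rate of $\vec u$ in the inertial frame. $\vec p_r,\vec p_v$ are the costates of position and velocity; the form (ii) and relations (iii) and the closed-loop relation for $\theta$ are properties of optimal extremals established in prior work (with $\omega=\sqrt{\mu/r^3}\,(1-3\sin^2\theta)$ and $\dot\omega=-\frac{3\mu}{r^3}\sin\theta\cos\theta$) and are taken here as hypotheses. $\mu>0$ is the gravitational constant. *)

theory Defs
  imports "HOL-Analysis.Analysis"
begin

end

theory Submission
  imports Defs
begin

theorem mainTheorem5:
  fixes \<mu> r v \<phi> \<gamma> \<theta> \<omega> c v\<^sub>c :: real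
    and rr vv pr pv :: "real \<times> real"
  assumes mu_pos: "\<mu> > 0"
    and r_pos: "r > 0"
    and omega_def: "\<omega> = sqrt (\<mu> / r ^ 3) * (1 - 3 * (sin \<theta>)\<^sup>2)"
    and vc_def: "v\<^sub>c = sqrt (\<mu> / r)"
    and pos: "rr = (r * cos \<phi>, r * sin \<phi>)"
    and vel: "vv = (v * (- sin (\<phi> - \<gamma>)), v * cos (\<phi> - \<gamma>))"
    and v_nz: "v \<noteq> 0"
    and cosg_nz: "cos \<gamma> \<noteq> 0"
    and c_nz: "c \<noteq> 0"
    and costate_r: "pr = (c * \<omega> * (- cos (\<theta> - \<phi>)), c * \<omega> * sin (\<theta> - \<phi>))"
    and costate_v: "pv = (c * sin (\<theta> - \<phi>), c * cos (\<theta> - \<phi>))"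
    and rel_iii: "\<omega> * r * v * sin (\<theta> - \<gamma>) = v\<^sub>c\<^sup>2 * sin \<theta>"
    and transv: "(pr \<bullet> rr + pv \<bullet> vv) * (rr \<bullet> vv) = (pv \<bullet> rr) * (v\<^sup>2 + v\<^sub>c\<^sup>2)"
  shows "(v\<^sub>c\<^sup>2 + \<omega>\<^sup>2 * r\<^sup>2) * sin \<theta> = 0 \<and> sin \<theta> = 0 \<and>
    ((sin (\<gamma> - \<theta>) = (v\<^sub>c / v) * (sin \<theta> / sqrt (1 - 3 * (sin \<theta>)\<^sup>2))
      \<and> \<theta> \<in> {-pi/2<..<pi/2} \<and> \<gamma> \<in> {-pi/2<..<pi/2})
     \<longrightarrow> \<theta> = 0 \<and> \<gamma> = 0)"
proof -
  obtain a where ha: "\<theta> = a + \<phi>" by (metis diff_add_cancel)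
  obtain d where hd: "\<phi> = d + \<gamma>" by (metis diff_add_cancel)
  have trig: "(sin \<phi>)\<^sup>2 + (cos \<phi>)\<^sup>2 = 1" "(sin \<gamma>)\<^sup>2 + (cos \<gamma>)\<^sup>2 = 1"
    "(sin a)\<^sup>2 + (cos a)\<^sup>2 = 1" "(sin d)\<^sup>2 + (cos d)\<^sup>2 = 1" by simp_all
  have d1: "pr \<bullet> rr = - c * \<omega> * r * cos \<theta>"
    unfolding costate_r pos ha by (simp add: cos_add algebra_simps)
  have d2: "pv \<bullet> vv = c * v * cos (\<theta> - \<gamma>)"
    unfolding costate_v vel ha using hd
    by (simp add: cos_add cos_diff sin_diff algebra_simps)
  have d3: "rr \<bullet> vv = r * v * sin \<gamma>"
  proof -
    have "rr \<bullet> vv = r * v * (sin \<phi> * cos (\<phi> - \<gamma>) - cos \<phi> * sin (\<phi> - \<gamma>))"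
      unfolding pos vel by (simp add: algebra_simps)
    also have "sin \<phi> * cos (\<phi> - \<gamma>) - cos \<phi> * sin (\<phi> - \<gamma>) = sin (\<phi> - (\<phi> - \<gamma>))"
      by (simp only: sin_diff)
    finally show ?thesis by simp
  qed
  have d4: "pv \<bullet> rr = c * r * sin \<theta>"
    unfolding costate_v pos ha by (simp add: sin_add algebra_simps)
  have T: "(- \<omega> * r * cos \<theta> + v * cos (\<theta> - \<gamma>)) * (r * v * sin \<gamma>) = r * sin \<theta> * (v\<^sup>2 + v\<^sub>c\<^sup>2)"
  proof -
    have "c * ((- \<omega> * r * cos \<theta> + v * cos (\<theta> - \<gamma>)) * (r * v * sin \<gamma>)) = c * (r * sin \<theta> * (v\<^sup>2 + v\<^sub>c\<^sup>2))"
      using transv unfolding d1 d2 d3 d4 by (simp add: algebra_simps)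
    thus ?thesis using c_nz by simp
  qed
  define X where "X = v * sin (\<theta> - \<gamma>)"
  have sth: "sin \<theta> = sin (\<theta> - \<gamma>) * cos \<gamma> + cos (\<theta> - \<gamma>) * sin \<gamma>"
    by (metis diff_add_cancel sin_add)
  have A: "- \<omega> * r * v * cos \<theta> * sin \<gamma> - v * X * cos \<gamma> = sin \<theta> * v\<^sub>c\<^sup>2"
  proof -
    have "r * (- \<omega> * r * v * cos \<theta> * sin \<gamma> - v * X * cos \<gamma>) = r * (sin \<theta> * v\<^sub>c\<^sup>2)"
      using T unfolding X_def
      by (simp add: sth power2_eq_square algebra_simps)
    thus ?thesis using r_pos by simp
  qed
  have B: "\<omega> * r * X = v\<^sub>c\<^sup>2 * sin \<theta>" using rel_iii unfolding X_def by (simp add: algebra_simps)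
  have Xe: "X = v * (sin \<theta> * cos \<gamma> - cos \<theta> * sin \<gamma>)" unfolding X_def by (simp add: sin_diff)
  have "- \<omega> * r * v * sin \<theta> * cos \<gamma> = X * v * cos \<gamma>"
  proof -
    have e1: "v * cos \<theta> * sin \<gamma> = v * sin \<theta> * cos \<gamma> - X" using Xe by (simp add: algebra_simps)
    have b': "sin \<theta> * v\<^sub>c\<^sup>2 = \<omega> * r * X" using B by (simp add: mult.commute)
    have e2: "- \<omega> * r * (v * cos \<theta> * sin \<gamma>) - v * X * cos \<gamma> = \<omega> * r * X"
      using A unfolding b' by (simp add: mult.assoc)
    have "- \<omega> * r * (v * sin \<theta> * cos \<gamma> - X) - v * X * cos \<gamma> = \<omega> * r * X"
      using e2 unfolding e1 .
    thus ?thesis by (simp add: algebra_simps)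
  qed
  hence "(v * cos \<gamma>) * X = (v * cos \<gamma>) * (- \<omega> * r * sin \<theta>)" by (simp add: algebra_simps)
  moreover have nz: "v * cos \<gamma> \<noteq> 0" using v_nz cosg_nz by simp
  ultimately have Xv: "X = - \<omega> * r * sin \<theta>" using mult_left_cancel[OF nz] by blast
  have main: "(v\<^sub>c\<^sup>2 + \<omega>\<^sup>2 * r\<^sup>2) * sin \<theta> = 0"
    using B unfolding Xv by (simp add: power2_eq_square algebra_simps)
  have vcpos: "v\<^sub>c\<^sup>2 > 0" using vc_def mu_pos r_pos by simp
  have "v\<^sub>c\<^sup>2 + \<omega>\<^sup>2 * r\<^sup>2 > 0" by (intro add_pos_nonneg vcpos) simp
  hence s0: "sin \<theta> = 0" using main by (metis mult_eq_0_iff less_irrefl)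
  have last: "\<theta> = 0 \<and> \<gamma> = 0"
    if H: "sin (\<gamma> - \<theta>) = (v\<^sub>c / v) * (sin \<theta> / sqrt (1 - 3 * (sin \<theta>)\<^sup>2))"
      "\<theta> \<in> {-pi/2<..<pi/2}" "\<gamma> \<in> {-pi/2<..<pi/2}"
  proof -
    have "- pi < \<theta>" "\<theta> < pi" using H(2) pi_gt_zero by auto
    hence t0: "\<theta> = 0" using s0 sin_eq_0_pi by blast
    have "sin \<gamma> = 0" using H(1) s0 t0 by simp
    moreover have "- pi < \<gamma>" "\<gamma> < pi" using H(3) pi_gt_zero by auto
    ultimately have "\<gamma> = 0" using sin_eq_0_pi by blast
    thus ?thesis using t0 by simp
  qed
  show ?thesis using main s0 last by blast
qed

end
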